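(* Let $(\mathrm{Con},\sqsubseteq,(s_i)_{i\in G})$ be a spatial constraint system with distributed spaces $(\Delta_I)_{I\subseteq G}$. Then: (1) $(\Delta_I)_{I\subseteq G}$ is a group distribution candidate; (2) if $(d_I)_{I\subseteq G}$ is any group distribution candidate, then $d_I\preceq \Delta_I$ for every $I\subseteq G$.
   Context: A constraint system (cs) is a complete lattice $(\mathrm{Con},\sqsubseteq)$, with join $\sqcup$, meet $\sqcap$, bottom $\mathit{true}$ and top $\mathit{false}$; $d\sqsupseteq c$ means $c\sqsubseteq d$. A space function over the cs is a self-map $f:\mathrm{Con}\to\mathrm{Con}$ that is continuous (preserves the join of every directed set) and satisfies $f(\mathit{true})=\mathit{true}$ and $f(c\sqcup d)=f(c)\sqcup f(d)$ for all $c,d$. Let $\mathcal{S}(\mathrm{Con})$ be the set of space functions, ordered pointwise: $f\preceq g$ iff $f(c)\sqsubseteq g(c)$ for all $c\in\mathrm{Con}$. A spatial constraint system (scs) $(\mathrm{Con},\sqsubseteq,(s_i)_{i\in G})$ is a cs together with a family of space functions $s_i$ indexed by an arbitrary (possibly infinite) set $G$ of agents. Its distributed spaces are $\Delta_I=\max\{f\in\mathcal{S}(\mathrm{Con}) : f\preceq s_i \text{ for every } i\in I\}$ for $I\subseteq G$ (this greatest element exists). A group distribution candidate is a family $(d_I)_{I\subseteq G}$ of self-maps on $\mathrm{Con}$ such that for all $I,J\subseteq G$: (D.1) $d_I$ is a space function; (D.2) $d_I=s_i$ if $I=\{i\}$; (D.3) $d_J\preceq d_I$ whenever $I\subseteq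 J$. *)

theory Defs
  imports Main
begin

text \<open>The constraint system is a complete lattice type 'c: the order is \<le> (entailment),
  join is sup, meet is inf, true is bot, false is top. Self-maps on 'c are ordered
  pointwise by the library order on functions (le_fun), which is exactly the order
  f \<preceq> g of the paper.\<close>

definition directed :: "'c::complete_lattice set \<Rightarrow> bool" where
  "directed D \<longleftrightarrow> D \<noteq> {} \<and> (\<forall>x\<in>D. \<forall>y\<in>D. \<exists>z\<in>D. x \<le> z \<and> y \<le> z)"

definition continuous_map :: "('c::complete_lattice \<Rightarrow> 'c) \<Rightarrow> bool" where
  "continuous_map f \<longleftrightarrow> (\<forall>D. directed D \<longrightarrow> f (Sup D) = Sup (f ` D))"

definition space_function :: "('c::complete_lattice \<Rightarrow> 'c) \<Rightarrow> bool" where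
  "space_function f \<longleftrightarrow> continuous_map f \<and> f bot = bot \<and> (\<forall>c d. f (sup c d) = sup (f c) (f d))"

definition scs :: "'g set \<Rightarrow> ('g \<Rightarrow> 'c::complete_lattice \<Rightarrow> 'c) \<Rightarrow> bool" where
  "scs G s \<longleftrightarrow> (\<forall>i\<in>G. space_function (s i))"

definition dspace :: "('g \<Rightarrow> 'c::complete_lattice \<Rightarrow> 'c) \<Rightarrow> 'g set \<Rightarrow> 'c \<Rightarrow> 'c" where
  "dspace s I = (GREATEST f. space_function f \<and> (\<forall>i\<in>I. f \<le> s i))"

definition group_distribution_candidate ::
  "'g set \<Rightarrow> ('g \<Rightarrow> 'c::complete_lattice \<Rightarrow> 'c) \<Rightarrow> ('g set \<Rightarrow> 'c \<Rightarrow> 'c) \<Rightarrow> bool" where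
  "group_distribution_candidate G s d \<longleftrightarrow>
     (\<forall>I J. I \<subseteq> G \<longrightarrow> J \<subseteq> G \<longrightarrow>
        space_function (d I)
      \<and> (\<forall>i. I = {i} \<longrightarrow> d I = s i)
      \<and> (I \<subseteq> J \<longrightarrow> d J \<le> d I))"

end

theory Submission
  imports Defs
begin

lemma sup_space:
  fixes S :: "('c::complete_lattice \<Rightarrow> 'c) set"
  assumes "\<forall>f\<in>S. space_function f"
  shows "space_function (Sup S)"
proof -
  have c: "continuous_map (Sup S)"
    unfolding continuous_map_def
  proof (intro allI impI)
    fix D :: "'c set" assume "directed D"
    have "(Sup S) (Sup D) = (SUP f\<in>S. f (Sup D))" by simp
    also have "\<dots> = (SUP f\<in>S. SUP x\<in>D. f x)"
      using assms `directed D` unfolding space_function_def continuous_map_def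
      by (intro SUP_cong) auto
    also have "\<dots> = (SUP x\<in>D. SUP f\<in>S. f x)" by (rule SUP_commute)
    finally show "(Sup S) (Sup D) = Sup ((Sup S) ` D)" by (simp add: image_image)
  qed
  have b: "(Sup S) bot = bot" using assms unfolding space_function_def by simp
  have j: "(Sup S) (sup c d) = sup ((Sup S) c) ((Sup S) d)" for c d
  proof -
    have "(Sup S) (sup c d) = (SUP f\<in>S. sup (f c) (f d))"
      using assms unfolding space_function_def by simp
    also have "\<dots> = sup ((Sup S) c) ((Sup S) d)" unfolding Sup_apply by (rule Complete_Lattices.SUP_sup_distrib[symmetric])
    finally show ?thesis .
  qed
  show ?thesis using c b j unfolding space_function_def by blast
qed

lemma dspace_char:
  fixes s :: "'g \<Rightarrow> 'c::complete_lattice \<Rightarrow> 'c"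
  shows "dspace s I = Sup {f. space_function f \<and> (\<forall>i\<in>I. f \<le> s i)}"
    and "space_function (dspace s I)"
    and "\<forall>i\<in>I. dspace s I \<le> s i"
    and "space_function g \<Longrightarrow> \<forall>i\<in>I. g \<le> s i \<Longrightarrow> g \<le> dspace s I"
proof -
  let ?S = "{f. space_function f \<and> (\<forall>i\<in>I. f \<le> s i)}"
  have sp: "space_function (Sup ?S)" by (rule sup_space) auto
  have le: "\<forall>i\<in>I. Sup ?S \<le> s i" by (auto intro: Sup_least)
  show e: "dspace s I = Sup ?S" unfolding dspace_def
    by (rule Greatest_equality) (use sp le in \<open>auto intro: Sup_upper\<close>)
  show "space_function (dspace s I)" using e sp by simp
  show "\<forall>i\<in>I. dspace s I \<le> s i" using e le by simp
  show "space_function g \<Longrightarrow> \<forall>i\<in>I. g \<le> s i \<Longrightarrow> g \<le> dspace s I"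
    using e by (auto intro: Sup_upper)
qed

theorem mainTheorem1:
  fixes G :: "'g set" and s :: "'g \<Rightarrow> 'c::complete_lattice \<Rightarrow> 'c"
  assumes "scs G s"
  shows "group_distribution_candidate G s (dspace s)
         \<and> (\<forall>d. group_distribution_candidate G s d \<longrightarrow> (\<forall>I. I \<subseteq> G \<longrightarrow> d I \<le> dspace s I))"
proof
  show "group_distribution_candidate G s (dspace s)"
    unfolding group_distribution_candidate_def
  proof (intro allI impI conjI)
    fix I J :: "'g set"
    show "space_function (dspace s I)" by (rule dspace_char(2))
  next
    fix I J :: "'g set" and i assume IG: "I \<subseteq> G" and "I = {i}"
    then have sf: "space_function (s i)" using assms unfolding scs_def by auto
    show "dspace s I = s i"
      using dspace_char(3)[where s=s and I=I] dspace_char(4)[where g="s i" and I=I and s=s] sf \<open>I = {i}\<close>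
      by (auto intro: order.antisym)
  next
    fix I J :: "'g set" assume "I \<subseteq> J"
    show "dspace s J \<le> dspace s I"
      using dspace_char(2,3)[where s=s and I=J] dspace_char(4)[where g="dspace s J" and I=I and s=s] \<open>I \<subseteq> J\<close> by blast
  qed
  show "\<forall>d. group_distribution_candidate G s d \<longrightarrow> (\<forall>I. I \<subseteq> G \<longrightarrow> d I \<le> dspace s I)"
  proof (intro allI impI)
    fix d I assume gd: "group_distribution_candidate G s d" and IG: "I \<subseteq> G"
    have sf: "space_function (d I)" using gd IG unfolding group_distribution_candidate_def by blast
    have "\<forall>i\<in>I. d I \<le> s i"
    proof
      fix i assume "i \<in> I"
      then have "{i} \<subseteq> G" "{i} \<subseteq> I" using IG by auto
      then show "d I \<le> s i" using gd IG unfolding group_distribution_candidate_def by metis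
    qed
    then show "d I \<le> dspace s I" using dspace_char(4) sf by blast
  qed
qed

end
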